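(* Let $\mathcal G=(\mathcal V,\mathcal E,W)$ be a network, $h^-\le h^+$ in $\mathbb R^{\mathcal V}$ and $\mathcal H=\prod_i[h_i^-,h_i^+]$. The following are equivalent: (a) the coordination game on $\mathcal G$ is $\mathcal H$-robustly unpolarizable (for every $h\in\mathcal H$ it has no equilibrium outside $\{\pm\mathbf 1\}$); (b) $\mathcal G$ is $\mathcal H$-robustly indecomposable (i.e., $h$-indecomposable for every $h\in\mathcal H$); (c) $\mathcal G$ is $(h^-,h^+)$-indecomposable.
   Context: A network is $\mathcal G=(\mathcal V,\mathcal E,W)$ with finite node set $\mathcal V$, links $\mathcal E\subseteq\mathcal V\times\mathcal V$, weight matrix $W\in\mathbb R_+^{\mathcal V\times\mathcal V}$ with zero diagonal, $W_{ij}>0$ iff $(i,j)\in\mathcal E$; for $\mathcal S\subseteq\mathcal V$, $w_i^{\mathcal S}=\sum_{j\in\mathcal S}W_{ij}$. $\mathcal X=\{-1,+1\}^{\mathcal V}$. Indecomposability: for $h^-\le h^+$, $\mathcal G$ is $(h^-,h^+)$-indecomposable if for every partition $\mathcal V=\mathcal V^+\cup\mathcal V^-$ into two disjoint nonempty sets there exist a sign $s\in\{-,+\}$ and a node $i\in\mathcal V^s$ with $w_i^{\mathcal V^s}+s\,h_i^s<w_i^{\mathcal V^{-s}}$ (here $s\,h_i^s$ means $+h_i^+$ if $s=+$ and $-h_i^-$ if $s=-$, and $-s$ is the opposite sign). $\mathcal G$ is $h$-indecomposable if it is $(h,h)$-indecomposable. Coordination game with external field $h$: players $\mathcal V$, actions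 $\{\pm1\}$, utilities $u_i(x)=x_i(\sum_jW_{ij}x_j+h_i)$; $x^*$ is an equilibrium if for every $i$, $x_i^*$ maximizes $u_i(\cdot,x^*_{-i})$ over $\{\pm1\}$. *)

theory Defs
  imports Complex_Main "HOL-Library.FuncSet"
begin

text \<open>A network on the finite node set V is given by a weight function
  W :: 'v => 'v => real, nonnegative, with zero diagonal; links are the pairs
  with positive weight.  Only the values of W on V x V matter.\<close>

definition network :: "'v set \<Rightarrow> ('v \<Rightarrow> 'v \<Rightarrow> real) \<Rightarrow> bool" where
  "network V W \<longleftrightarrow> finite V \<and> (\<forall>i\<in>V. \<forall>j\<in>V. W i j \<ge> 0) \<and> (\<forall>i\<in>V. W i i = 0)"

definition wdeg :: "('v \<Rightarrow> 'v \<Rightarrow> real) \<Rightarrow> 'v \<Rightarrow> 'v set \<Rightarrow> real" where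
  "wdeg W i S = (\<Sum>j\<in>S. W i j)"

definition indecomposable2 ::
  "'v set \<Rightarrow> ('v \<Rightarrow> 'v \<Rightarrow> real) \<Rightarrow> ('v \<Rightarrow> real) \<Rightarrow> ('v \<Rightarrow> real) \<Rightarrow> bool" where
  "indecomposable2 V W hm hp \<longleftrightarrow>
     (\<forall>Vp Vm. Vp \<union> Vm = V \<and> Vp \<inter> Vm = {} \<and> Vp \<noteq> {} \<and> Vm \<noteq> {} \<longrightarrow>
        (\<exists>i\<in>Vp. wdeg W i Vp + hp i < wdeg W i Vm) \<or>
        (\<exists>i\<in>Vm. wdeg W i Vm - hm i < wdeg W i Vp))"

definition indecomposable ::
  "'v set \<Rightarrow> ('v \<Rightarrow> 'v \<Rightarrow> real) \<Rightarrow> ('v \<Rightarrow> real) \<Rightarrow> bool" where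
  "indecomposable V W h \<longleftrightarrow> indecomposable2 V W h h"

definition configs :: "'v set \<Rightarrow> ('v \<Rightarrow> real) set" where
  "configs V = V \<rightarrow>\<^sub>E {-1, 1}"

definition utility ::
  "'v set \<Rightarrow> ('v \<Rightarrow> 'v \<Rightarrow> real) \<Rightarrow> ('v \<Rightarrow> real) \<Rightarrow> 'v \<Rightarrow> ('v \<Rightarrow> real) \<Rightarrow> real" where
  "utility V W h i x = x i * ((\<Sum>j\<in>V. W i j * x j) + h i)"

definition equilibrium ::
  "'v set \<Rightarrow> ('v \<Rightarrow> 'v \<Rightarrow> real) \<Rightarrow> ('v \<Rightarrow> real) \<Rightarrow> ('v \<Rightarrow> real) \<Rightarrow> bool" where
  "equilibrium V W h x \<longleftrightarrow> x \<in> configs V \<and>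
     (\<forall>i\<in>V. \<forall>y\<in>{-1, 1}. utility V W h i (x(i := y)) \<le> utility V W h i x)"

definition consensus :: "'v set \<Rightarrow> ('v \<Rightarrow> real) set" where
  "consensus V = {(\<lambda>i. if i \<in> V then 1 else undefined), (\<lambda>i. if i \<in> V then -1 else undefined)}"

definition box :: "'v set \<Rightarrow> ('v \<Rightarrow> real) \<Rightarrow> ('v \<Rightarrow> real) \<Rightarrow> ('v \<Rightarrow> real) set" where
  "box V hm hp = {h. \<forall>i\<in>V. hm i \<le> h i \<and> h i \<le> hp i}"

definition robustly_unpolarizable ::
  "'v set \<Rightarrow> ('v \<Rightarrow> 'v \<Rightarrow> real) \<Rightarrow> ('v \<Rightarrow> real) set \<Rightarrow> bool" where
  "robustly_unpolarizable V W H \<longleftrightarrow>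
     (\<forall>h\<in>H. \<forall>x. equilibrium V W h x \<longrightarrow> x \<in> consensus V)"

definition robustly_indecomposable ::
  "'v set \<Rightarrow> ('v \<Rightarrow> 'v \<Rightarrow> real) \<Rightarrow> ('v \<Rightarrow> real) set \<Rightarrow> bool" where
  "robustly_indecomposable V W H \<longleftrightarrow> (\<forall>h\<in>H. indecomposable V W h)"

end

theory Submission
  imports Defs
begin

lemma sum_upd_same:
  fixes W :: "'a \<Rightarrow> 'a \<Rightarrow> real" and x :: "'a \<Rightarrow> real"
  assumes "W i i = 0"
  shows "(\<Sum>j\<in>V. W i j * (x(i := y)) j) = (\<Sum>j\<in>V. W i j * x j)"
proof (rule sum.cong)
  fix j assume "j \<in> V"
  show "W i j * (x(i := y)) j = W i j * x j"
    by (cases "j = i") (simp_all add: assms)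
qed simp


lemma sum_split:
  assumes "finite V" "Vp \<union> Vm = V" "Vp \<inter> Vm = {}"
    "\<forall>j\<in>Vp. x j = 1" "\<forall>j\<in>Vm. x j = -1"
  shows "(\<Sum>j\<in>V. W i j * x j) = wdeg W i Vp - wdeg W i Vm"
proof -
  have f: "finite Vp" "finite Vm" using assms by auto
  have "(\<Sum>j\<in>V. W i j * x j) = (\<Sum>j\<in>Vp. W i j * x j) + (\<Sum>j\<in>Vm. W i j * x j)"
    using assms(2,3) f by (metis sum.union_disjoint)
  also have "(\<Sum>j\<in>Vp. W i j * x j) = wdeg W i Vp"
    unfolding wdeg_def using assms(4) by (auto intro: sum.cong)
  also have "(\<Sum>j\<in>Vm. W i j * x j) = - wdeg W i Vm"
    unfolding wdeg_def using assms(5) by (simp add: sum_negf[symmetric])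
  finally show ?thesis by simp
qed

lemma equil_char:
  assumes net: "network V W" and part: "Vp \<union> Vm = V" "Vp \<inter> Vm = {}"
    and xp: "\<forall>j\<in>Vp. x j = 1" and xm: "\<forall>j\<in>Vm. x j = -1" and xc: "x \<in> configs V"
  shows "equilibrium V W h x \<longleftrightarrow>
     (\<forall>i\<in>Vp. wdeg W i Vm \<le> wdeg W i Vp + h i) \<and> (\<forall>i\<in>Vm. wdeg W i Vp \<le> wdeg W i Vm - h i)"
proof -
  have fin: "finite V" and diag: "\<forall>i\<in>V. W i i = 0" using net by (auto simp: network_def)
  define S where "S i = wdeg W i Vp - wdeg W i Vm" for i
  have sumS: "(\<Sum>j\<in>V. W i j * x j) = S i" for i
    unfolding S_def using sum_split[OF fin part xp xm] .
  have util: "utility V W h i (x(i := y)) = y * (S i + h i)" if "i \<in> V" for i y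
    unfolding utility_def using sum_upd_same[of W i, OF diag[rule_format, OF that]] sumS by simp
  have ux: "utility V W h i x = x i * (S i + h i)" for i
    unfolding utility_def sumS by simp
  have loc: "(\<forall>y\<in>{-1, 1}. utility V W h i (x(i := y)) \<le> utility V W h i x) \<longleftrightarrow>
       (if i \<in> Vp then 0 \<le> S i + h i else S i + h i \<le> 0)" if "i \<in> V" for i
  proof (cases "i \<in> Vp")
    case True then show ?thesis using util[OF that] ux[of i] xp by auto
  next
    case False then have "i \<in> Vm" using that part by auto
    then show ?thesis using util[OF that] ux[of i] xm False by auto
  qed
  have "equilibrium V W h x \<longleftrightarrow> (\<forall>i\<in>V. if i \<in> Vp then 0 \<le> S i + h i else S i + h i \<le> 0)"
    unfolding equilibrium_def using xc loc by auto
  also have "\<dots> \<longleftrightarrow> (\<forall>i\<in>Vp. wdeg W i Vm \<le> wdeg W i Vp + h i) \<and> (\<forall>i\<in>Vm. wdeg W i Vp \<le> wdeg W i Vm - h i)"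
  proof
    assume L: "\<forall>i\<in>V. if i \<in> Vp then 0 \<le> S i + h i else S i + h i \<le> 0"
    show "(\<forall>i\<in>Vp. wdeg W i Vm \<le> wdeg W i Vp + h i) \<and> (\<forall>i\<in>Vm. wdeg W i Vp \<le> wdeg W i Vm - h i)"
    proof (intro conjI ballI)
      fix i assume "i \<in> Vp"
      then have "0 \<le> S i + h i" using L part by (metis UnI1)
      then show "wdeg W i Vm \<le> wdeg W i Vp + h i" by (simp add: S_def)
    next
      fix i assume i: "i \<in> Vm"
      then have "i \<notin> Vp" using part by auto
      then have "S i + h i \<le> 0" using L part i by (metis UnI2)
      then show "wdeg W i Vp \<le> wdeg W i Vm - h i" by (simp add: S_def)
    qed
  next
    assume R: "(\<forall>i\<in>Vp. wdeg W i Vm \<le> wdeg W i Vp + h i) \<and> (\<forall>i\<in>Vm. wdeg W i Vp \<le> wdeg W i Vm - h i)"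
    show "\<forall>i\<in>V. if i \<in> Vp then 0 \<le> S i + h i else S i + h i \<le> 0"
    proof
      fix i assume i: "i \<in> V"
      show "if i \<in> Vp then 0 \<le> S i + h i else S i + h i \<le> 0"
      proof (cases "i \<in> Vp")
        case True then have "wdeg W i Vm \<le> wdeg W i Vp + h i" using R by blast
        then show ?thesis using True by (simp add: S_def)
      next
        case False then have "i \<in> Vm" using i part by auto
        then have "wdeg W i Vp \<le> wdeg W i Vm - h i" using R by blast
        then show ?thesis using False by (simp add: S_def)
      qed
    qed
  qed
  finally show ?thesis .
qed

lemma unpol_iff:
  assumes net: "network V W"
  shows "(\<forall>x. equilibrium V W h x \<longrightarrow> x \<in> consensus V) \<longleftrightarrow> indecomposable V W h"
proof
  assume A: "\<forall>x. equilibrium V W h x \<longrightarrow> x \<in> consensus V"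
  show "indecomposable V W h"
    unfolding indecomposable_def indecomposable2_def
  proof (intro allI impI)
    fix Vp Vm assume P: "Vp \<union> Vm = V \<and> Vp \<inter> Vm = {} \<and> Vp \<noteq> {} \<and> Vm \<noteq> {}"
    define x :: "'a \<Rightarrow> real" where "x = (\<lambda>i. if i \<in> Vp then 1 else if i \<in> Vm then -1 else undefined)"
    have xc: "x \<in> configs V"
      unfolding configs_def
    proof (rule PiE_I)
      fix i assume "i \<in> V" then show "x i \<in> {-1, 1}" using P by (auto simp: x_def)
    next
      fix i assume "i \<notin> V" then show "x i = undefined" using P by (auto simp: x_def)
    qed
    have xp: "\<forall>j\<in>Vp. x j = 1" and xm: "\<forall>j\<in>Vm. x j = -1" using P by (auto simp: x_def)
    obtain a where a: "a \<in> Vp" using P by auto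
    obtain b where b: "b \<in> Vm" using P by auto
    have aV: "a \<in> V" and bV: "b \<in> V" using a b P by auto
    have xa: "x a = 1" using a xp by blast
    have xb: "x b = -1" using b xm by blast
    have nc: "x \<notin> consensus V"
    proof
      assume "x \<in> consensus V"
      then have "x = (\<lambda>i. if i \<in> V then 1 else undefined) \<or> x = (\<lambda>i. if i \<in> V then -1 else undefined)"
        by (simp add: consensus_def)
      then show False
      proof
        assume "x = (\<lambda>i. if i \<in> V then 1 else undefined)"
        then have "x b = 1" using bV by simp
        then show False using xb by simp
      next
        assume "x = (\<lambda>i. if i \<in> V then -1 else undefined)"
        then have "x a = -1" using aV by simp
        then show False using xa by simp
      qed
    qed
    then have "\<not> equilibrium V W h x" using A by auto
    then show "(\<exists>i\<in>Vp. wdeg W i Vp + h i < wdeg W i Vm) \<or> (\<exists>i\<in>Vm. wdeg W i Vm - h i < wdeg W i Vp)"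
    proof -
      have "\<not> ((\<forall>i\<in>Vp. wdeg W i Vm \<le> wdeg W i Vp + h i) \<and> (\<forall>i\<in>Vm. wdeg W i Vp \<le> wdeg W i Vm - h i))"
        using equil_char[OF net _ _ xp xm xc, of h] P \<open>\<not> equilibrium V W h x\<close> by blast
      then show ?thesis by (auto simp: not_le)
    qed
  qed
next
  assume I: "indecomposable V W h"
  show "\<forall>x. equilibrium V W h x \<longrightarrow> x \<in> consensus V"
  proof (intro allI impI)
    fix x assume E: "equilibrium V W h x"
    then have xc: "x \<in> configs V" by (simp add: equilibrium_def)
    define Vp where "Vp = {i\<in>V. x i = 1}"
    define Vm where "Vm = {i\<in>V. x i = -1}"
    have part: "Vp \<union> Vm = V" "Vp \<inter> Vm = {}" using xc unfolding Vp_def Vm_def configs_def by auto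
    have xp: "\<forall>j\<in>Vp. x j = 1" and xm: "\<forall>j\<in>Vm. x j = -1" by (auto simp: Vp_def Vm_def)
    have C: "(\<forall>i\<in>Vp. wdeg W i Vm \<le> wdeg W i Vp + h i) \<and> (\<forall>i\<in>Vm. wdeg W i Vp \<le> wdeg W i Vm - h i)"
      using equil_char[OF net part xp xm xc] E by simp
    have "Vp = {} \<or> Vm = {}"
    proof (rule ccontr)
      assume "\<not> (Vp = {} \<or> Vm = {})"
      then have "(\<exists>i\<in>Vp. wdeg W i Vp + h i < wdeg W i Vm) \<or> (\<exists>i\<in>Vm. wdeg W i Vm - h i < wdeg W i Vp)"
        using I part unfolding indecomposable_def indecomposable2_def by blast
      then show False using C by (auto simp: not_le[symmetric])
    qed
    then show "x \<in> consensus V"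
    proof
      assume "Vp = {}"
      then have "\<forall>i\<in>V. x i = -1" using part xm by auto
      then have "x = (\<lambda>i. if i \<in> V then -1 else undefined)"
        using xc unfolding configs_def by (auto simp: PiE_def extensional_def)
      then show ?thesis by (simp add: consensus_def)
    next
      assume "Vm = {}"
      then have "\<forall>i\<in>V. x i = 1" using part xp by auto
      then have "x = (\<lambda>i. if i \<in> V then 1 else undefined)"
        using xc unfolding configs_def by (auto simp: PiE_def extensional_def)
      then show ?thesis by (simp add: consensus_def)
    qed
  qed
qed

theorem theorem3:
  fixes V :: "'v set" and W :: "'v \<Rightarrow> 'v \<Rightarrow> real" and hm hp :: "'v \<Rightarrow> real"
  assumes "network V W"
    and "\<forall>i\<in>V. hm i \<le> hp i"
  shows "(robustly_unpolarizable V W (box V hm hp) \<longleftrightarrow> robustly_indecomposable V W (box V hm hp))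
       \<and> (robustly_indecomposable V W (box V hm hp) \<longleftrightarrow> indecomposable2 V W hm hp)"
proof
  show "robustly_unpolarizable V W (box V hm hp) \<longleftrightarrow> robustly_indecomposable V W (box V hm hp)"
    unfolding robustly_unpolarizable_def robustly_indecomposable_def
    using unpol_iff[OF assms(1)] by (simp only:)
next
  show "robustly_indecomposable V W (box V hm hp) \<longleftrightarrow> indecomposable2 V W hm hp"
  proof
    assume R: "robustly_indecomposable V W (box V hm hp)"
    show "indecomposable2 V W hm hp"
      unfolding indecomposable2_def
    proof (intro allI impI)
      fix Vp Vm assume P: "Vp \<union> Vm = V \<and> Vp \<inter> Vm = {} \<and> Vp \<noteq> {} \<and> Vm \<noteq> {}"
      define h where "h i = (if i \<in> Vp then hp i else hm i)" for i
      have "h \<in> box V hm hp" using assms(2) P unfolding box_def h_def by auto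
      then have "indecomposable V W h" using R by (simp add: robustly_indecomposable_def)
      then have "(\<exists>i\<in>Vp. wdeg W i Vp + h i < wdeg W i Vm) \<or> (\<exists>i\<in>Vm. wdeg W i Vm - h i < wdeg W i Vp)"
        using P unfolding indecomposable_def indecomposable2_def by blast
      then show "(\<exists>i\<in>Vp. wdeg W i Vp + hp i < wdeg W i Vm) \<or> (\<exists>i\<in>Vm. wdeg W i Vm - hm i < wdeg W i Vp)"
      proof
        assume "\<exists>i\<in>Vp. wdeg W i Vp + h i < wdeg W i Vm"
        then show ?thesis unfolding h_def by auto
      next
        assume "\<exists>i\<in>Vm. wdeg W i Vm - h i < wdeg W i Vp"
        moreover have "i \<in> Vm \<Longrightarrow> i \<notin> Vp" for i using P by auto
        ultimately show ?thesis unfolding h_def by auto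
      qed
    qed
  next
    assume I: "indecomposable2 V W hm hp"
    show "robustly_indecomposable V W (box V hm hp)"
      unfolding robustly_indecomposable_def indecomposable_def
    proof
      fix h assume hb: "h \<in> box V hm hp"
      show "indecomposable2 V W h h"
        unfolding indecomposable2_def
      proof (intro allI impI)
        fix Vp Vm assume P: "Vp \<union> Vm = V \<and> Vp \<inter> Vm = {} \<and> Vp \<noteq> {} \<and> Vm \<noteq> {}"
        have "(\<exists>i\<in>Vp. wdeg W i Vp + hp i < wdeg W i Vm) \<or> (\<exists>i\<in>Vm. wdeg W i Vm - hm i < wdeg W i Vp)"
          using I P unfolding indecomposable2_def by blast
        moreover have "\<forall>i\<in>V. hm i \<le> h i \<and> h i \<le> hp i" using hb by (simp add: box_def)
        then have "\<forall>i\<in>V. hm i \<le> h i \<and> h i \<le> hp i" .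
        from calculation(1) show "(\<exists>i\<in>Vp. wdeg W i Vp + h i < wdeg W i Vm) \<or> (\<exists>i\<in>Vm. wdeg W i Vm - h i < wdeg W i Vp)"
        proof
          assume "\<exists>i\<in>Vp. wdeg W i Vp + hp i < wdeg W i Vm"
          then obtain i where "i \<in> Vp" "wdeg W i Vp + hp i < wdeg W i Vm" by blast
          moreover have "h i \<le> hp i" using calculation(1) P \<open>\<forall>i\<in>V. hm i \<le> h i \<and> h i \<le> hp i\<close> by blast
          ultimately have "wdeg W i Vp + h i < wdeg W i Vm" by linarith
          then show ?thesis using \<open>i \<in> Vp\<close> by blast
        next
          assume "\<exists>i\<in>Vm. wdeg W i Vm - hm i < wdeg W i Vp"
          then obtain i where "i \<in> Vm" "wdeg W i Vm - hm i < wdeg W i Vp" by blast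
          moreover have "hm i \<le> h i" using calculation(1) P \<open>\<forall>i\<in>V. hm i \<le> h i \<and> h i \<le> hp i\<close> by blast
          ultimately have "wdeg W i Vm - h i < wdeg W i Vp" by linarith
          then show ?thesis using \<open>i \<in> Vm\<close> by blast
        qed
      qed
    qed
  qed
qed

end
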